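(* Let $R$ be a finite commutative local Frobenius ring with residue field $\mathbb{F}_q$. For $i=1,2$, let $C_i$ be a linear code of length $n$ over $R$ with generator matrix $\mathrm{G}_i$ and parity check matrix $\mathrm{H}_i$. Then $\dim(C_1\cap C_2)=\dim(C_1)-\texttt{Rank}_q(\mathrm{H}_2\mathrm{G}_1^\top)$ or $\dim(C_1\cap C_2)=\dim(C_2)-\texttt{Rank}_q(\mathrm{H}_1\mathrm{G}_2^\top)$.
   Context: A linear code of length $n$ over $R$ is an $R$-submodule of $R^n$; $\dim(C):=\log_q|C|$. A generator matrix of $C$ is a matrix whose rows generate $C$; a parity check matrix of $C$ is a generator matrix of $C^\perp=\{\mathbf{u}\in R^n:\sum_j u_jc_j=0\ \forall \mathbf{c}\in C\}$. For a matrix $\mathrm{A}$ over $R$, $\texttt{Rank}_q(\mathrm{A}):=\log_q|M|$ where $M$ is the $R$-submodule spanned by the rows of $\mathrm{A}$. *)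

theory Defs
  imports Complex_Main "Jordan_Normal_Form.Matrix"
begin

section \<open>Ideals of a commutative ring (type-class idiom, the ring is the type 'a)\<close>

definition is_ideal :: "'a::comm_ring_1 set \<Rightarrow> bool" where
  "is_ideal I \<longleftrightarrow> 0 \<in> I \<and> (\<forall>x\<in>I. \<forall>y\<in>I. x + y \<in> I) \<and> (\<forall>r. \<forall>x\<in>I. r * x \<in> I)"

definition maximal_ideal :: "'a::comm_ring_1 set \<Rightarrow> bool" where
  "maximal_ideal M \<longleftrightarrow> is_ideal M \<and> M \<noteq> UNIV \<and>
     (\<forall>J. is_ideal J \<and> M \<subseteq> J \<and> J \<noteq> UNIV \<longrightarrow> J = M)"

definition minimal_ideal :: "'a::comm_ring_1 set \<Rightarrow> bool" where
  "minimal_ideal I \<longleftrightarrow> is_ideal I \<and> I \<noteq> {0} \<and>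
     (\<forall>J. is_ideal J \<and> J \<subseteq> I \<and> J \<noteq> {0} \<longrightarrow> J = I)"

text \<open>Local ring: exactly one maximal ideal.\<close>
definition local_ring :: "'a::comm_ring_1 itself \<Rightarrow> bool" where
  "local_ring _ \<longleftrightarrow> (\<exists>!M::'a set. maximal_ideal M)"

text \<open>Frobenius (for a finite commutative local ring): the socle is simple
  (socle isomorphic to the residue field), i.e. there is exactly one minimal ideal.\<close>
definition frobenius_local_ring :: "'a::comm_ring_1 itself \<Rightarrow> bool" where
  "frobenius_local_ring _ \<longleftrightarrow> (\<exists>!I::'a set. minimal_ideal I)"

text \<open>The unique maximal ideal and the size of the residue field R/M.\<close>
definition the_maximal_ideal :: "'a::comm_ring_1 set" where
  "the_maximal_ideal = (THE M. maximal_ideal M)"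

definition residue_field_card :: "'a::comm_ring_1 itself \<Rightarrow> nat" where
  "residue_field_card _ = card {(\<lambda>m. x + m) ` (the_maximal_ideal :: 'a set) | x. True}"

section \<open>Linear codes\<close>

text \<open>Linear code of length n: an R-submodule of R^n.\<close>
definition linear_code :: "nat \<Rightarrow> 'a::comm_ring_1 vec set \<Rightarrow> bool" where
  "linear_code n C \<longleftrightarrow> C \<subseteq> carrier_vec n \<and> 0\<^sub>v n \<in> C \<and>
     (\<forall>x\<in>C. \<forall>y\<in>C. x + y \<in> C) \<and> (\<forall>r. \<forall>x\<in>C. r \<cdot>\<^sub>v x \<in> C)"

text \<open>R-submodule spanned by the rows of A: all R-linear combinations of the rows.\<close>
definition row_module :: "'a::comm_ring_1 mat \<Rightarrow> 'a vec set" where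
  "row_module A = {transpose_mat A *\<^sub>v c | c. c \<in> carrier_vec (dim_row A)}"

definition dual_code :: "nat \<Rightarrow> 'a::comm_ring_1 vec set \<Rightarrow> 'a vec set" where
  "dual_code n C = {u \<in> carrier_vec n. \<forall>c\<in>C. u \<bullet> c = 0}"

definition generator_matrix :: "nat \<Rightarrow> 'a::comm_ring_1 mat \<Rightarrow> 'a vec set \<Rightarrow> bool" where
  "generator_matrix n G C \<longleftrightarrow> dim_col G = n \<and> row_module G = C"

definition parity_check_matrix :: "nat \<Rightarrow> 'a::comm_ring_1 mat \<Rightarrow> 'a vec set \<Rightarrow> bool" where
  "parity_check_matrix n H C \<longleftrightarrow> generator_matrix n H (dual_code n C)"

text \<open>dim(C) = log_q |C|, Rank_q(A) = log_q |row module of A|.\<close>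
definition code_dim :: "nat \<Rightarrow> 'a vec set \<Rightarrow> real" where
  "code_dim q C = log (real q) (real (card C))"

definition rank_q :: "nat \<Rightarrow> 'a::comm_ring_1 mat \<Rightarrow> real" where
  "rank_q q A = log (real q) (real (card (row_module A)))"

end

theory Submission
  imports Defs "HOL-Library.Real_Mod"
begin


definition subgrp :: "'a::comm_ring_1 set \<Rightarrow> bool" where
  "subgrp H \<longleftrightarrow> 0 \<in> H \<and> (\<forall>x\<in>H. \<forall>y\<in>H. x + y \<in> H) \<and> (\<forall>x\<in>H. - x \<in> H)"

definition charon :: "'a::comm_ring_1 set \<Rightarrow> ('a \<Rightarrow> complex) \<Rightarrow> bool" where
  "charon H \<chi> \<longleftrightarrow> (\<forall>x\<in>H. \<forall>y\<in>H. \<chi> (x + y) = \<chi> x * \<chi> y) \<and> (\<forall>x\<in>H. \<chi> x \<noteq> 0)"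

definition Hg :: "'a::comm_ring_1 set \<Rightarrow> 'a \<Rightarrow> 'a set" where
  "Hg H g = {h + of_int k * g | h k. h \<in> H}"

lemma subgrp_nat_mult:
  assumes "subgrp H" "h \<in> H" shows "of_nat k * h \<in> H"
  using assms by (induction k) (auto simp: subgrp_def algebra_simps)

lemma subgrp_int_mult:
  assumes "subgrp H" "h \<in> H" shows "of_int k * h \<in> H"
proof (cases "k \<ge> 0")
  case True
  then have "of_int k * h = of_nat (nat k) * h" by simp
  then show ?thesis using subgrp_nat_mult[OF assms] by simp
next
  case False
  then have "of_int k * h = - (of_nat (nat (-k)) * h)" by simp
  then show ?thesis using subgrp_nat_mult[OF assms, of "nat (-k)"] assms(1)
    unfolding subgrp_def by simp
qed

lemma charon_zero:
  assumes "subgrp H" "charon H \<chi>" shows "\<chi> 0 = 1"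
proof -
  have "0 \<in> H" using assms(1) by (simp add: subgrp_def)
  then have "\<chi> 0 = \<chi> 0 * \<chi> 0" "\<chi> 0 \<noteq> 0" using assms(2) unfolding charon_def
    by (metis add_0)+
  then show ?thesis by simp
qed

lemma charon_nat:
  assumes "subgrp H" "charon H \<chi>" "h \<in> H" shows "\<chi> (of_nat k * h) = \<chi> h ^ k"
proof (induction k)
  case 0 then show ?case using charon_zero[OF assms(1,2)] by simp
next
  case (Suc k)
  have "of_nat (Suc k) * h = h + of_nat k * h" by (simp add: algebra_simps)
  moreover have "of_nat k * h \<in> H" using subgrp_nat_mult[OF assms(1,3)] .
  ultimately show ?case using Suc assms(2,3) unfolding charon_def by simp
qed

lemma charon_neg:
  assumes "subgrp H" "charon H \<chi>" "h \<in> H" shows "\<chi> (- h) = inverse (\<chi> h)"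
proof -
  have "-h \<in> H" using assms(1,3) by (simp add: subgrp_def)
  then have "\<chi> (h + - h) = \<chi> h * \<chi> (-h)" using assms(2,3) unfolding charon_def by blast
  then have "\<chi> h * \<chi> (-h) = 1" using charon_zero[OF assms(1,2)] by simp
  then show ?thesis by (metis inverse_unique)
qed

lemma charon_int:
  assumes "subgrp H" "charon H \<chi>" "h \<in> H" shows "\<chi> (of_int k * h) = power_int (\<chi> h) k"
proof (cases "k \<ge> 0")
  case True
  then have "of_int k * h = of_nat (nat k) * h" by simp
  then show ?thesis using charon_nat[OF assms, of "nat k"] True
    by (metis nonneg_int_cases power_int_of_nat nat_int)
next
  case False
  then have e: "of_int k * h = - (of_nat (nat (-k)) * h)" by simp
  have "of_nat (nat (-k)) * h \<in> H" using subgrp_nat_mult[OF assms(1,3)] .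
  then have "\<chi> (of_int k * h) = inverse (\<chi> h ^ nat (-k))"
    unfolding e using charon_neg[OF assms(1,2)] charon_nat[OF assms] by simp
  also have "\<dots> = power_int (\<chi> h) k"
    using False by (metis add.inverse_inverse int_nat_eq neg_0_less_iff_less not_le
        order.strict_iff_not power_int_minus power_int_of_nat)
  finally show ?thesis .
qed

lemma finite_char_pos:
  "\<exists>c>0. (of_nat c :: 'a::{comm_ring_1,finite}) = 0"
proof -
  have "finite (range (of_nat :: nat \<Rightarrow> 'a))" by simp
  then have "\<not> inj (of_nat :: nat \<Rightarrow> 'a)"
    using finite_imageD infinite_UNIV_nat by blast
  then obtain a b :: nat where ab: "a \<noteq> b" "(of_nat a :: 'a) = of_nat b"
    unfolding inj_def by blast
  show ?thesis
  proof (cases "a < b")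
    case True
    then have "(of_nat (b - a) :: 'a) = of_nat b - of_nat a" by (simp add: of_nat_diff)
    then show ?thesis using ab True by (intro exI[of _ "b - a"]) auto
  next
    case False
    then have "(of_nat (a - b) :: 'a) = of_nat a - of_nat b" by (simp add: of_nat_diff)
    then show ?thesis using ab False by (intro exI[of _ "a - b"]) auto
  qed
qed

lemma subgrp_Hg:
  assumes "subgrp H" shows "subgrp (Hg H g)" "H \<subseteq> Hg H g" "g \<in> Hg H g"
proof -
  show "subgrp (Hg H g)"
    unfolding subgrp_def Hg_def
  proof (intro conjI ballI)
    show "0 \<in> {h + of_int k * g |h k. h \<in> H}" using assms
      by (auto simp: subgrp_def intro!: exI[of _ 0])
  next
    fix x y assume "x \<in> {h + of_int k * g |h k. h \<in> H}" "y \<in> {h + of_int k * g |h k. h \<in> H}"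
    then obtain h1 k1 h2 k2 where "x = h1 + of_int k1 * g" "y = h2 + of_int k2 * g" "h1 \<in> H" "h2 \<in> H"
      by blast
    then show "x + y \<in> {h + of_int k * g |h k. h \<in> H}" using assms
      by (auto simp: subgrp_def algebra_simps intro!: exI[of _ "h1 + h2"] exI[of _ "k1 + k2"])
  next
    fix x assume "x \<in> {h + of_int k * g |h k. h \<in> H}"
    then obtain h1 k1 where "x = h1 + of_int k1 * g" "h1 \<in> H"
      by blast
    then show "- x \<in> {h + of_int k * g |h k. h \<in> H}" using assms
      by (auto simp: subgrp_def algebra_simps intro!: exI[of _ "- h1"] exI[of _ "- k1"])
  qed
  show "H \<subseteq> Hg H g" unfolding Hg_def by (force intro: exI[of _ 0])
  have "g = 0 + of_int 1 * g" by simp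
  then show "g \<in> Hg H g" unfolding Hg_def using assms
    unfolding subgrp_def by blast
qed

lemma ext_char:
  fixes H :: "'a::comm_ring_1 set"
  assumes sg: "subgrp H" and ch: "charon H \<chi>" and m: "m > 0" "of_nat m * g \<in> H"
    and mmin: "\<forall>j. 0 < j \<and> j < m \<longrightarrow> of_nat j * g \<notin> H"
    and z: "z ^ m = \<chi> (of_nat m * g)"
  shows "\<exists>\<chi>'. charon (Hg H g) \<chi>' \<and> (\<forall>h\<in>H. \<chi>' h = \<chi> h) \<and> \<chi>' g = z"
proof -
  have dv: "int m dvd k" if "of_int k * g \<in> H" for k
  proof -
    define r where "r = k mod int m"
    define t where "t = k div int m"
    have k: "k = t * int m + r" unfolding r_def t_def by simp
    have r: "0 \<le> r" "r < int m" unfolding r_def using m by auto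
    have "of_int r * g = of_int k * g + of_int (- t) * (of_nat m * g)"
      unfolding k by (simp add: algebra_simps)
    also have "\<dots> \<in> H" using sg that subgrp_int_mult[OF sg m(2)] unfolding subgrp_def by blast
    finally have rH: "of_int r * g \<in> H" .
    show ?thesis
    proof (rule ccontr)
      assume "\<not> ?thesis"
      then have "r \<noteq> 0" unfolding r_def by (simp add: dvd_eq_mod_eq_0)
      then have "0 < nat r" "nat r < m" using r by auto
      moreover have "of_nat (nat r) * g \<in> H" using rH r by simp
      ultimately show False using mmin by blast
    qed
  qed
  have cz: "\<chi> (of_nat m * g) \<noteq> 0" using ch m(2) unfolding charon_def by blast
  then have z0: "z \<noteq> 0" using z m(1) by (metis zero_power)
  have wd: "\<chi> h * power_int z k = \<chi> h' * power_int z k'"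
    if hH: "h \<in> H" "h' \<in> H" and eq: "h + of_int k * g = h' + of_int k' * g" for h h' k k'
  proof -
    have "of_int (k - k') * g = h' + - h" using eq by (simp add: algebra_simps)
    also have "\<dots> \<in> H" using sg hH unfolding subgrp_def by blast
    finally obtain t where t: "k - k' = int m * t" using dv by (meson dvdE)
    have "h' = h + of_int (k - k') * g" using eq by (simp add: algebra_simps)
    also have "\<dots> = h + of_int t * (of_nat m * g)" unfolding t by (simp add: algebra_simps)
    finally have h': "h' = h + of_int t * (of_nat m * g)" .
    have "\<chi> h' = \<chi> h * power_int (\<chi> (of_nat m * g)) t"
      unfolding h' using ch hH subgrp_int_mult[OF sg m(2)] charon_int[OF sg ch m(2)]
      unfolding charon_def by simp
    also have "\<dots> = \<chi> h * power_int z (int m * t)"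
      by (simp add: power_int_mult z[symmetric])
    finally have "\<chi> h' * power_int z k' = \<chi> h * (power_int z (int m * t) * power_int z k')"
      by simp
    also have "power_int z (int m * t) * power_int z k' = power_int z k"
      using z0 t by (metis power_int_add add_diff_cancel_right' diff_add_cancel)
    finally show ?thesis by simp
  qed
  define rep where "rep x = (SOME p. fst p \<in> H \<and> x = fst p + of_int (snd p) * g)" for x
  define \<chi>' where "\<chi>' x = \<chi> (fst (rep x)) * power_int z (snd (rep x))" for x
  have key: "\<chi>' x = \<chi> h * power_int z k" if "h \<in> H" "x = h + of_int k * g" for x h k
  proof -
    have "\<exists>p. fst p \<in> H \<and> x = fst p + of_int (snd p) * g" using that by (intro exI[of _ "(h,k)"]) auto
    then have "fst (rep x) \<in> H \<and> x = fst (rep x) + of_int (snd (rep x)) * g"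
      unfolding rep_def by (rule someI_ex)
    then show ?thesis unfolding \<chi>'_def using wd that by metis
  qed
  have "charon (Hg H g) \<chi>'"
    unfolding charon_def
  proof (intro conjI ballI)
    fix x y assume "x \<in> Hg H g" "y \<in> Hg H g"
    then obtain h1 k1 h2 k2 where xy: "x = h1 + of_int k1 * g" "y = h2 + of_int k2 * g" "h1 \<in> H" "h2 \<in> H"
      unfolding Hg_def by blast
    have "x + y = (h1 + h2) + of_int (k1 + k2) * g" using xy by (simp add: algebra_simps)
    moreover have "h1 + h2 \<in> H" using sg xy unfolding subgrp_def by blast
    ultimately have "\<chi>' (x + y) = \<chi> (h1 + h2) * power_int z (k1 + k2)" using key by blast
    also have "\<dots> = (\<chi> h1 * power_int z k1) * (\<chi> h2 * power_int z k2)"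
      using ch xy z0 unfolding charon_def by (simp add: power_int_add)
    also have "\<dots> = \<chi>' x * \<chi>' y" using key xy by simp
    finally show "\<chi>' (x + y) = \<chi>' x * \<chi>' y" .
  next
    fix x assume "x \<in> Hg H g"
    then obtain h1 k1 where xy: "x = h1 + of_int k1 * g" "h1 \<in> H"
      unfolding Hg_def by blast
    then show "\<chi>' x \<noteq> 0" using key[OF xy(2,1)] ch z0 unfolding charon_def by simp
  qed
  moreover have "\<forall>h\<in>H. \<chi>' h = \<chi> h" using key[where k=0] by simp
  moreover have "\<chi>' g = z" using key[of 0 g 1] sg charon_zero[OF sg ch] by (simp add: subgrp_def)
  ultimately show ?thesis by blast
qed

lemma least_mult:
  fixes g :: "'a::{comm_ring_1,finite}"
  assumes "subgrp H"
  shows "\<exists>m>0. of_nat m * g \<in> H \<and> (\<forall>j. 0 < j \<and> j < m \<longrightarrow> of_nat j * g \<notin> H)"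
proof -
  obtain c where c: "c > 0" "(of_nat c :: 'a) = 0" using finite_char_pos by blast
  have "\<exists>m. 0 < m \<and> of_nat m * g \<in> H" using c assms by (intro exI[of _ c]) (simp add: subgrp_def)
  then obtain m where "0 < m \<and> of_nat m * g \<in> H" "\<forall>j<m. \<not> (0 < j \<and> of_nat j * g \<in> H)"
    using exists_least_iff[of "\<lambda>m. 0 < m \<and> of_nat m * g \<in> H"] by blast
  then show ?thesis by blast
qed

lemma complex_root_ex: "m > 0 \<Longrightarrow> \<exists>z::complex. z ^ m = w"
proof -
  assume m: "m > 0"
  have "(rcis (root m (cmod w)) (Arg w / m)) ^ m = rcis (root m (cmod w) ^ m) (Arg w)"
    using m by (simp add: DeMoivre2)
  also have "root m (cmod w) ^ m = cmod w" using m by simp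
  finally show ?thesis using rcis_cmod_Arg by metis
qed

lemma sep_char:
  fixes s :: "'a::{comm_ring_1,finite}"
  assumes "s \<noteq> 0"
  shows "\<exists>\<chi>. charon UNIV \<chi> \<and> \<chi> s \<noteq> 1"
proof -
  have sg0: "subgrp ({0} :: 'a set)" by (simp add: subgrp_def)
  have ch0: "charon {0::'a} (\<lambda>_. 1)" by (simp add: charon_def)
  obtain m where m: "m > 0" "of_nat m * s \<in> {0}" "\<forall>j. 0 < j \<and> j < m \<longrightarrow> of_nat j * s \<notin> {0}"
    using least_mult[OF sg0, of s] by blast
  have "m \<noteq> 1" using m(2) assms by auto
  with m(1) have m2: "m \<ge> 2" by simp
  define z where "z = cis (2 * pi / m)"
  have zm: "z ^ m = 1" unfolding z_def DeMoivre using m2 by simp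
  have z1: "z \<noteq> 1"
  proof
    assume "z = 1"
    then obtain k :: int where k: "2 * pi / m = of_int k * (2 * pi)"
      unfolding z_def cis_eq_1_iff by blast
    then have "(2 * pi) * (1 / real m) = (2 * pi) * of_int k" by (simp add: field_simps)
    then have "1 / real m = of_int k" using pi_gt_zero by (metis mult_cancel_left pi_neq_zero
        mult_eq_0_iff zero_neq_numeral)
    moreover have "0 < 1 / real m" "1 / real m < 1" using m2 by auto
    ultimately show False by (metis of_int_0_less_iff of_int_less_1_iff not_le zero_less_one_class.zero_le_one
        int_one_le_iff_zero_less less_le_not_le)
  qed
  obtain \<chi>1 where ch1: "charon (Hg {0} s) \<chi>1" "\<chi>1 s = z"
    using ext_char[OF sg0 ch0 m(1,2) m(3)] zm by auto
  have sg1: "subgrp (Hg {0} s)" "s \<in> Hg {0} s" using subgrp_Hg[OF sg0] by auto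
  have ind: "\<exists>H \<chi>. subgrp H \<and> s \<in> H \<and> X \<subseteq> H \<and> charon H \<chi> \<and> \<chi> s = z" if "finite X" for X :: "'a set"
    using that
  proof (induction X rule: finite_induct)
    case empty then show ?case using sg1 ch1 by blast
  next
    case (insert x X)
    then obtain H \<chi> where H: "subgrp H" "s \<in> H" "X \<subseteq> H" "charon H \<chi>" "\<chi> s = z" by blast
    obtain m where m: "m > 0" "of_nat m * x \<in> H" "\<forall>j. 0 < j \<and> j < m \<longrightarrow> of_nat j * x \<notin> H"
      using least_mult[OF H(1), of x] by blast
    obtain w where "w ^ m = \<chi> (of_nat m * x)" using complex_root_ex[OF m(1)] by blast
    then obtain \<chi>' where \<chi>': "charon (Hg H x) \<chi>'" "\<forall>h\<in>H. \<chi>' h = \<chi> h"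
      using ext_char[OF H(1) H(4) m] by blast
    show ?case using subgrp_Hg[OF H(1), of x] \<chi>' H by (intro exI[of _ "Hg H x"] exI[of _ \<chi>']) auto
  qed
  obtain H \<chi> where "subgrp H" "UNIV \<subseteq> H" "charon H \<chi>" "\<chi> s = z" using ind[of UNIV] by auto
  then have "H = UNIV" by blast
  then show ?thesis using z1 \<open>charon H \<chi>\<close> \<open>\<chi> s = z\<close> by (intro exI[of _ \<chi>]) auto
qed

lemma gen_char:
  assumes "frobenius_local_ring TYPE('a::{comm_ring_1,finite})"
  shows "\<exists>\<chi>. charon (UNIV::'a set) \<chi> \<and> (\<forall>I::'a set. is_ideal I \<and> I \<noteq> {0} \<longrightarrow> (\<exists>x\<in>I. \<chi> x \<noteq> 1))"
proof -
  obtain S :: "'a set" where S: "minimal_ideal S" "\<forall>J. minimal_ideal J \<longrightarrow> J = S"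
    using assms unfolding frobenius_local_ring_def by blast
  have "0 \<in> S" "S \<noteq> {0}" using S(1) unfolding minimal_ideal_def is_ideal_def by auto
  then obtain s where s: "s \<in> S" "s \<noteq> 0" by blast
  obtain \<chi> where ch: "charon UNIV \<chi>" "\<chi> s \<noteq> 1" using sep_char[OF s(2)] by blast
  have "\<exists>x\<in>I. \<chi> x \<noteq> 1" if I: "is_ideal I" "I \<noteq> {0}" for I :: "'a set"
  proof -
    let ?P = "\<lambda>J. is_ideal J \<and> J \<subseteq> I \<and> J \<noteq> {0}"
    obtain J where J: "?P J" "\<forall>J'. ?P J' \<longrightarrow> card J \<le> card J'"
      using ex_has_least_nat[of ?P I card] I by blast
    have "minimal_ideal J"
      unfolding minimal_ideal_def
    proof (intro conjI allI impI)
      fix J' assume J': "is_ideal J' \<and> J' \<subseteq> J \<and> J' \<noteq> {0}"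
      then have "card J \<le> card J'" using J by blast
      then show "J' = J" using J' by (meson card_seteq finite)
    qed (use J in auto)
    then have "J = S" using S(2) by blast
    then show ?thesis using J s ch(2) by blast
  qed
  then show ?thesis using ch by blast
qed



lemma finite_carrier_vec: "finite (carrier_vec n :: 'a::finite vec set)"
proof -
  have "carrier_vec n \<subseteq> vec_of_list ` {xs :: 'a list. set xs \<subseteq> UNIV \<and> length xs = n}"
  proof
    fix v :: "'a vec" assume v: "v \<in> carrier_vec n"
    have "length (list_of_vec v) = n" using v by simp
    then have "list_of_vec v \<in> {xs :: 'a list. set xs \<subseteq> UNIV \<and> length xs = n}" by blast
    moreover have "v = vec_of_list (list_of_vec v)" by (rule vec_list[symmetric])
    ultimately show "v \<in> vec_of_list ` {xs. set xs \<subseteq> UNIV \<and> length xs = n}" by blast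
  qed
  moreover have "finite {xs :: 'a list. set xs \<subseteq> UNIV \<and> length xs = n}"
    by (rule finite_lists_length_eq) (rule finite_UNIV)
  ultimately show ?thesis by (rule finite_subset[OF _ finite_imageI])
qed

lemma sum_shift_zero:
  fixes \<psi> :: "'b \<Rightarrow> complex"
  assumes "finite A" "\<forall>x\<in>A. t x \<in> A" "inj_on t A" "\<forall>x\<in>A. \<psi> (t x) = w * \<psi> x" "w \<noteq> 1"
  shows "sum \<psi> A = 0"
proof -
  have tA: "t ` A = A" using endo_inj_surj[OF assms(1) _ assms(3)] assms(2) by blast
  have "sum \<psi> A = sum \<psi> (t ` A)" using tA by simp
  also have "\<dots> = sum (\<psi> \<circ> t) A" using sum.reindex[OF assms(3)] by simp
  also have "\<dots> = w * sum \<psi> A" using assms(4) by (simp add: sum_distrib_left)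
  finally have "(1 - w) * sum \<psi> A = 0" by (simp add: algebra_simps)
  then show ?thesis using assms(5) by simp
qed

lemma add_vec_cancel:
  assumes "a \<in> carrier_vec n" "x \<in> carrier_vec n" "y \<in> carrier_vec n" "a + x = a + y"
  shows "x = (y :: 'a::ab_group_add vec)"
proof (rule eq_vecI)
  fix i assume i: "i < dim_vec y"
  have "(a + x) $ i = (a + y) $ i" using assms(4) by simp
  then show "x $ i = y $ i" using i assms(1-3) by simp
next
  show "dim_vec x = dim_vec y" using assms by simp
qed

lemma ideal_right:
  fixes C :: "'a::comm_ring_1 vec set"
  assumes C: "linear_code n C" and u: "u \<in> carrier_vec n"
  shows "is_ideal {u \<bullet> c | c. c \<in> C}"
proof -
  have Csub: "C \<subseteq> carrier_vec n" and C0: "0\<^sub>v n \<in> C" and Cadd: "\<And>x y. x \<in> C \<Longrightarrow> y \<in> C \<Longrightarrow> x + y \<in> C"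
    and Csm: "\<And>r x. x \<in> C \<Longrightarrow> r \<cdot>\<^sub>v x \<in> C"
    using C unfolding linear_code_def by auto
  have eq: "{u \<bullet> c | c. c \<in> C} = (\<lambda>c. u \<bullet> c) ` C" by auto
  have "is_ideal ((\<lambda>c. u \<bullet> c) ` C)"
    unfolding is_ideal_def
  proof (intro conjI ballI allI)
    have "u \<bullet> 0\<^sub>v n = 0" using u by simp
    then show "0 \<in> (\<lambda>c. u \<bullet> c) ` C" using C0 by (rule image_eqI[OF sym])
  next
    fix x y assume "x \<in> (\<lambda>c. u \<bullet> c) ` C" "y \<in> (\<lambda>c. u \<bullet> c) ` C"
    then obtain c d where cd: "x = u \<bullet> c" "y = u \<bullet> d" "c \<in> C" "d \<in> C" by (elim imageE)
    then have cc: "c \<in> carrier_vec n" "d \<in> carrier_vec n" using Csub by auto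
    have "x + y = u \<bullet> (c + d)" unfolding cd(1,2) by (rule scalar_prod_add_distrib[OF u cc, symmetric])
    then show "x + y \<in> (\<lambda>c. u \<bullet> c) ` C" using Cadd[OF cd(3,4)] by (rule image_eqI)
  next
    fix r x assume "x \<in> (\<lambda>c. u \<bullet> c) ` C"
    then obtain c where c: "x = u \<bullet> c" "c \<in> C" by (elim imageE)
    then have cc: "c \<in> carrier_vec n" using Csub by auto
    have "r * x = u \<bullet> (r \<cdot>\<^sub>v c)" unfolding c(1) using scalar_prod_smult_distrib[OF u cc] by simp
    then show "r * x \<in> (\<lambda>c. u \<bullet> c) ` C" using Csm[OF c(2)] by (rule image_eqI)
  qed
  then show ?thesis unfolding eq .
qed

lemma linear_code_carrier: "linear_code n (carrier_vec n :: 'a::comm_ring_1 vec set)"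
  unfolding linear_code_def by auto

lemma ideal_left:
  fixes c :: "'a::comm_ring_1 vec"
  assumes c: "c \<in> carrier_vec n"
  shows "is_ideal {u \<bullet> c | u. u \<in> carrier_vec n}"
proof -
  have e: "\<And>u. u \<in> carrier_vec n \<Longrightarrow> u \<bullet> c = c \<bullet> u" using comm_scalar_prod[OF _ c] by blast
  have "{u \<bullet> c | u. u \<in> carrier_vec n} = {c \<bullet> u | u. u \<in> carrier_vec n}"
    using e by force
  then show ?thesis using ideal_right[OF linear_code_carrier c] by simp
qed

lemma duality:
  fixes C :: "'a::{comm_ring_1,finite} vec set"
  assumes frob: "frobenius_local_ring TYPE('a)" and C: "linear_code n C"
  shows "card C * card (dual_code n C) = card (carrier_vec n :: 'a vec set)"
proof -
  obtain \<chi> where ch: "charon (UNIV::'a set) \<chi>"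
    and gen: "\<And>I::'a set. is_ideal I \<Longrightarrow> I \<noteq> {0} \<Longrightarrow> \<exists>x\<in>I. \<chi> x \<noteq> 1"
    using gen_char[OF frob] by blast
  have chadd: "\<chi> (x + y) = \<chi> x * \<chi> y" for x y using ch unfolding charon_def by blast
  have ch0: "\<chi> 0 = 1" using charon_zero[OF _ ch] by (simp add: subgrp_def)
  have Csub: "C \<subseteq> carrier_vec n" and C0: "0\<^sub>v n \<in> C" and Cadd: "\<And>x y. x \<in> C \<Longrightarrow> y \<in> C \<Longrightarrow> x + y \<in> C"
    and Csm: "\<And>r x. x \<in> C \<Longrightarrow> r \<cdot>\<^sub>v x \<in> C"
    using C unfolding linear_code_def by auto
  let ?N = "carrier_vec n :: 'a vec set"
  have finN: "finite ?N" by (rule finite_carrier_vec)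
  have finC: "finite C" using finite_subset[OF Csub finN] .
  have Dsub: "dual_code n C \<subseteq> ?N" unfolding dual_code_def by auto
  have inner: "(\<Sum>c\<in>C. \<chi> (u \<bullet> c)) = (if u \<in> dual_code n C then of_nat (card C) else 0)"
    if u: "u \<in> ?N" for u
  proof (cases "u \<in> dual_code n C")
    case True
    then have "\<forall>c\<in>C. u \<bullet> c = 0" unfolding dual_code_def by auto
    then show ?thesis using True ch0 by simp
  next
    case False
    let ?I = "{u \<bullet> c | c. c \<in> C}"
    have I: "is_ideal ?I" by (rule ideal_right[OF C u])
    have "?I \<noteq> {0}" using False u unfolding dual_code_def by blast
    then obtain c1 where c1: "c1 \<in> C" "\<chi> (u \<bullet> c1) \<noteq> 1" using gen[OF I] by blast
    have "(\<Sum>c\<in>C. \<chi> (u \<bullet> c)) = 0"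
    proof (rule sum_shift_zero[OF finC, of "\<lambda>c. c1 + c" _ "\<chi> (u \<bullet> c1)"])
      show "\<forall>x\<in>C. c1 + x \<in> C" using Cadd c1 by blast
      show "inj_on ((+) c1) C"
        by (rule inj_onI) (use Csub c1(1) add_vec_cancel in blast)
      show "\<forall>x\<in>C. \<chi> (u \<bullet> (c1 + x)) = \<chi> (u \<bullet> c1) * \<chi> (u \<bullet> x)"
      proof
        fix x assume x: "x \<in> C"
        then have "u \<bullet> (c1 + x) = u \<bullet> c1 + u \<bullet> x" using Csub c1 u scalar_prod_add_distrib[of u n c1 x] by blast
        then show "\<chi> (u \<bullet> (c1 + x)) = \<chi> (u \<bullet> c1) * \<chi> (u \<bullet> x)" using chadd by simp
      qed
    qed (use c1 in auto)
    then show ?thesis using False by simp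
  qed
  have outer: "(\<Sum>u\<in>?N. \<chi> (u \<bullet> c)) = (if c = 0\<^sub>v n then of_nat (card ?N) else 0)"
    if c: "c \<in> C" for c
  proof (cases "c = 0\<^sub>v n")
    case True
    then show ?thesis using ch0 by simp
  next
    case False
    have cN: "c \<in> ?N" using c Csub by blast
    have "\<exists>i<n. c $ i \<noteq> 0"
    proof (rule ccontr)
      assume "\<not> ?thesis"
      then have "c = 0\<^sub>v n" using cN by (intro eq_vecI) auto
      then show False using False by simp
    qed
    then obtain i where i: "i < n" "c $ i \<noteq> 0" by blast
    let ?I = "{u \<bullet> c | u. u \<in> ?N}"
    have I: "is_ideal ?I" by (rule ideal_left[OF cN])
    have "unit_vec n i \<bullet> c = c $ i" using i cN by simp
    then have "c $ i \<in> ?I" using i by (intro CollectI exI[of _ "unit_vec n i"]) simp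
    then have "?I \<noteq> {0}" using i by auto
    then obtain u1 where u1: "u1 \<in> ?N" "\<chi> (u1 \<bullet> c) \<noteq> 1" using gen[OF I] by blast
    have "(\<Sum>u\<in>?N. \<chi> (u \<bullet> c)) = 0"
    proof (rule sum_shift_zero[OF finN, of "\<lambda>u. u1 + u" _ "\<chi> (u1 \<bullet> c)"])
      show "\<forall>x\<in>?N. u1 + x \<in> ?N" using u1 by auto
      show "inj_on ((+) u1) ?N"
        by (rule inj_onI) (use u1(1) add_vec_cancel in blast)
      show "\<forall>x\<in>?N. \<chi> ((u1 + x) \<bullet> c) = \<chi> (u1 \<bullet> c) * \<chi> (x \<bullet> c)"
      proof
        fix x assume x: "x \<in> ?N"
        then have "(u1 + x) \<bullet> c = u1 \<bullet> c + x \<bullet> c" using cN u1 add_scalar_prod_distrib[of u1 n x c] by blast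
        then show "\<chi> ((u1 + x) \<bullet> c) = \<chi> (u1 \<bullet> c) * \<chi> (x \<bullet> c)" using chadd by simp
      qed
    qed (use u1 in auto)
    then show ?thesis using False by simp
  qed
  have "(\<Sum>u\<in>?N. \<Sum>c\<in>C. \<chi> (u \<bullet> c)) = (\<Sum>u\<in>?N. if u \<in> dual_code n C then of_nat (card C) else 0)"
    using inner by simp
  also have "\<dots> = (\<Sum>u\<in>dual_code n C. of_nat (card C))"
    using Dsub finN by (simp add: sum.If_cases Int_absorb1)
  also have "\<dots> = of_nat (card (dual_code n C) * card C)" by simp
  finally have e1: "(\<Sum>u\<in>?N. \<Sum>c\<in>C. \<chi> (u \<bullet> c)) = of_nat (card (dual_code n C) * card C)" .
  have "(\<Sum>u\<in>?N. \<Sum>c\<in>C. \<chi> (u \<bullet> c)) = (\<Sum>c\<in>C. \<Sum>u\<in>?N. \<chi> (u \<bullet> c))" by (rule sum.swap)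
  also have "\<dots> = (\<Sum>c\<in>C. if c = 0\<^sub>v n then of_nat (card ?N) else 0)" using outer by simp
  also have "\<dots> = of_nat (card ?N)" using C0 finC by (simp add: sum.delta')
  finally have "of_nat (card (dual_code n C) * card C) = (of_nat (card ?N) :: complex)" using e1 by simp
  then have "card (dual_code n C) * card C = card ?N" using of_nat_eq_iff by blast
  then show ?thesis by (metis mult.commute)
qed



lemma mv_zero: "A \<in> carrier_mat r c \<Longrightarrow> A *\<^sub>v 0\<^sub>v c = (0\<^sub>v r :: 'a::comm_ring_1 vec)"
  by (intro eq_vecI) auto

lemma mv_smult:
  assumes "A \<in> carrier_mat r c" "v \<in> carrier_vec c"
  shows "A *\<^sub>v (k \<cdot>\<^sub>v v) = k \<cdot>\<^sub>v (A *\<^sub>v (v :: 'a::comm_ring_1 vec))"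
proof (rule eq_vecI)
  fix i assume i: "i < dim_vec (k \<cdot>\<^sub>v (A *\<^sub>v v))"
  then have i': "i < r" using assms by simp
  have rc: "row A i \<in> carrier_vec c" using assms i' by auto
  show "(A *\<^sub>v (k \<cdot>\<^sub>v v)) $ i = (k \<cdot>\<^sub>v (A *\<^sub>v v)) $ i"
    using i' assms scalar_prod_smult_distrib[OF rc assms(2)] by simp
qed (use assms in simp)

lemma rowmod_linear:
  assumes A: "A \<in> carrier_mat r c"
  shows "linear_code c (row_module (A :: 'a::comm_ring_1 mat))"
proof -
  have AT: "transpose_mat A \<in> carrier_mat c r" using A by simp
  have rm: "row_module A = (\<lambda>y. transpose_mat A *\<^sub>v y) ` carrier_vec r"
    unfolding row_module_def using A by auto
  show ?thesis unfolding linear_code_def rm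
  proof (intro conjI ballI allI)
    show "(\<lambda>y. transpose_mat A *\<^sub>v y) ` carrier_vec r \<subseteq> carrier_vec c" using AT by auto
    show "0\<^sub>v c \<in> (\<lambda>y. transpose_mat A *\<^sub>v y) ` carrier_vec r"
      using mv_zero[OF AT] by (intro image_eqI[of _ _ "0\<^sub>v r"]) auto
  next
    fix x y assume "x \<in> (\<lambda>y. transpose_mat A *\<^sub>v y) ` carrier_vec r" "y \<in> (\<lambda>y. transpose_mat A *\<^sub>v y) ` carrier_vec r"
    then obtain a b where ab: "x = transpose_mat A *\<^sub>v a" "y = transpose_mat A *\<^sub>v b" "a \<in> carrier_vec r" "b \<in> carrier_vec r"
      by (elim imageE)
    have "x + y = transpose_mat A *\<^sub>v (a + b)" unfolding ab(1,2)
      by (rule mult_add_distrib_mat_vec[OF AT ab(3,4), symmetric])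
    moreover have "a + b \<in> carrier_vec r" using ab by simp
    ultimately show "x + y \<in> (\<lambda>y. transpose_mat A *\<^sub>v y) ` carrier_vec r" by (rule image_eqI)
  next
    fix k x assume "x \<in> (\<lambda>y. transpose_mat A *\<^sub>v y) ` carrier_vec r"
    then obtain a where a: "x = transpose_mat A *\<^sub>v a" "a \<in> carrier_vec r" by (elim imageE)
    have "k \<cdot>\<^sub>v x = transpose_mat A *\<^sub>v (k \<cdot>\<^sub>v a)" unfolding a(1)
      by (rule mv_smult[OF AT a(2), symmetric])
    moreover have "k \<cdot>\<^sub>v a \<in> carrier_vec r" using a by simp
    ultimately show "k \<cdot>\<^sub>v x \<in> (\<lambda>y. transpose_mat A *\<^sub>v y) ` carrier_vec r" by (rule image_eqI)
  qed
qed

lemma kernel_char: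
  assumes A: "A \<in> carrier_mat r c" and x: "x \<in> carrier_vec c"
  shows "x \<in> dual_code c (row_module (A :: 'a::comm_ring_1 mat)) \<longleftrightarrow> A *\<^sub>v x = 0\<^sub>v r"
proof
  assume "x \<in> dual_code c (row_module A)"
  then have h0: "\<And>y. y \<in> carrier_vec r \<Longrightarrow> x \<bullet> (transpose_mat A *\<^sub>v y) = 0"
    unfolding dual_code_def row_module_def using A by auto
  have h: "(transpose_mat A *\<^sub>v y) \<bullet> x = 0" if y: "y \<in> carrier_vec r" for y
  proof -
    have "transpose_mat A *\<^sub>v y \<in> carrier_vec c" using A y by simp
    then show ?thesis using h0[OF y] comm_scalar_prod[OF x] by metis
  qed
  show "A *\<^sub>v x = 0\<^sub>v r"
  proof (rule eq_vecI)
    fix i assume i: "i < dim_vec (0\<^sub>v r :: 'a vec)"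
    then have i': "i < r" by simp
    have "(transpose_mat A *\<^sub>v unit_vec r i) \<bullet> x = unit_vec r i \<bullet> (A *\<^sub>v x)"
      by (rule transpose_vec_mult_scalar[OF A x]) (use i' in simp)
    also have "\<dots> = (A *\<^sub>v x) $ i" using i' A x by (intro scalar_prod_left_unit) auto
    finally show "(A *\<^sub>v x) $ i = 0\<^sub>v r $ i" using h[of "unit_vec r i"] i' by simp
  qed (use A in simp)
next
  assume h: "A *\<^sub>v x = 0\<^sub>v r"
  have "x \<bullet> (transpose_mat A *\<^sub>v y) = 0" if y: "y \<in> carrier_vec r" for y
  proof -
    have "transpose_mat A *\<^sub>v y \<in> carrier_vec c" using A y by simp
    moreover have "(transpose_mat A *\<^sub>v y) \<bullet> x = 0"
      using transpose_vec_mult_scalar[OF A x y] h y by simp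
    ultimately show ?thesis using comm_scalar_prod[OF x] by metis
  qed
  then show "x \<in> dual_code c (row_module A)"
    unfolding dual_code_def row_module_def using A x by auto
qed

lemma fiber_count:
  fixes D :: "'a::{comm_ring_1,finite} vec set"
  assumes A: "A \<in> carrier_mat r c" and D: "linear_code c D"
  shows "card D = card ((\<lambda>x. A *\<^sub>v x) ` D) * card {x\<in>D. A *\<^sub>v x = 0\<^sub>v r}"
proof -
  have Dsub: "D \<subseteq> carrier_vec c" and Dadd: "\<And>x y. x \<in> D \<Longrightarrow> y \<in> D \<Longrightarrow> x + y \<in> D"
    and Dsm: "\<And>k x. x \<in> D \<Longrightarrow> k \<cdot>\<^sub>v x \<in> D"
    using D unfolding linear_code_def by auto
  have finD: "finite D" using finite_subset[OF Dsub finite_carrier_vec] .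
  let ?f = "\<lambda>x. A *\<^sub>v x"
  let ?K = "{x\<in>D. A *\<^sub>v x = 0\<^sub>v r}"
  let ?F = "\<lambda>y. {x\<in>D. ?f x = y}"
  have fib: "card (?F (?f a)) = card ?K" if a: "a \<in> D" for a
  proof -
    have ac: "a \<in> carrier_vec c" using a Dsub by auto
    have "bij_betw (\<lambda>k. a + k) ?K (?F (?f a))"
    proof (rule bij_betw_imageI)
      show "inj_on (\<lambda>k. a + k) ?K"
        by (rule inj_onI) (use Dsub ac add_vec_cancel in blast)
      show "(\<lambda>k. a + k) ` ?K = ?F (?f a)"
      proof
        show "(\<lambda>k. a + k) ` ?K \<subseteq> ?F (?f a)"
        proof
          fix x assume "x \<in> (\<lambda>k. a + k) ` ?K"
          then obtain k where k: "x = a + k" "k \<in> D" "A *\<^sub>v k = 0\<^sub>v r" by blast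
          have kc: "k \<in> carrier_vec c" using k Dsub by auto
          have "A *\<^sub>v x = A *\<^sub>v a + A *\<^sub>v k" unfolding k(1) by (rule mult_add_distrib_mat_vec[OF A ac kc])
          also have "\<dots> = A *\<^sub>v a" unfolding k(3) using A by (intro eq_vecI) auto
          finally show "x \<in> ?F (?f a)" using Dadd[OF a k(2)] k(1) by simp
        qed
      next
        show "?F (?f a) \<subseteq> (\<lambda>k. a + k) ` ?K"
        proof
          fix x assume x: "x \<in> ?F (?f a)"
          then have xD: "x \<in> D" and xc: "x \<in> carrier_vec c" and fx: "A *\<^sub>v x = A *\<^sub>v a" using Dsub by auto
          define k where "k = x + (-1) \<cdot>\<^sub>v a"
          have kD: "k \<in> D" unfolding k_def using Dadd[OF xD Dsm[OF a]] .
          have mc: "(-1) \<cdot>\<^sub>v a \<in> carrier_vec c" using ac by simp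
          have "A *\<^sub>v k = A *\<^sub>v x + A *\<^sub>v ((-1) \<cdot>\<^sub>v a)" unfolding k_def by (rule mult_add_distrib_mat_vec[OF A xc mc])
          also have "\<dots> = A *\<^sub>v x + (-1) \<cdot>\<^sub>v (A *\<^sub>v x)" unfolding mv_smult[OF A ac] fx ..
          also have "\<dots> = 0\<^sub>v r" using A by (intro eq_vecI) auto
          finally have kK: "k \<in> ?K" using kD by simp
          have "a + k = x" unfolding k_def using ac xc by (intro eq_vecI) auto
          then show "x \<in> (\<lambda>k. a + k) ` ?K" using kK by (rule image_eqI[OF sym])
        qed
      qed
    qed
    then show ?thesis by (rule bij_betw_same_card[symmetric])
  qed
  have "D = (\<Union>y\<in>?f ` D. ?F y)" by blast
  then have "card D = card (\<Union>y\<in>?f ` D. ?F y)" by simp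
  also have "\<dots> = (\<Sum>y\<in>?f ` D. card (?F y))"
    by (rule card_UN_disjoint) (use finD in auto)
  also have "\<dots> = (\<Sum>y\<in>?f ` D. card ?K)"
    by (rule sum.cong) (use fib in auto)
  also have "\<dots> = card (?f ` D) * card ?K" by simp
  finally show ?thesis .
qed

lemma dual_linear:
  fixes C :: "'a::comm_ring_1 vec set"
  assumes C: "C \<subseteq> carrier_vec n"
  shows "linear_code n (dual_code n C)"
  unfolding linear_code_def dual_code_def
proof (intro conjI ballI allI)
  show "{u \<in> carrier_vec n. \<forall>c\<in>C. u \<bullet> c = 0} \<subseteq> carrier_vec n" by auto
  show "0\<^sub>v n \<in> {u \<in> carrier_vec n. \<forall>c\<in>C. u \<bullet> c = 0}" using C by auto
next
  fix x y assume x: "x \<in> {u \<in> carrier_vec n. \<forall>c\<in>C. u \<bullet> c = 0}" and y: "y \<in> {u \<in> carrier_vec n. \<forall>c\<in>C. u \<bullet> c = 0}"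
  have "(x + y) \<bullet> c = 0" if c: "c \<in> C" for c
  proof -
    have "c \<in> carrier_vec n" using c C by auto
    then have "(x + y) \<bullet> c = x \<bullet> c + y \<bullet> c" using x y add_scalar_prod_distrib[of x n y c] by blast
    then show ?thesis using x y c by simp
  qed
  then show "x + y \<in> {u \<in> carrier_vec n. \<forall>c\<in>C. u \<bullet> c = 0}" using x y by simp
next
  fix k x assume x: "x \<in> {u \<in> carrier_vec n. \<forall>c\<in>C. u \<bullet> c = 0}"
  have "(k \<cdot>\<^sub>v x) \<bullet> c = 0" if c: "c \<in> C" for c
  proof -
    have "c \<in> carrier_vec n" using c C by auto
    then have "(k \<cdot>\<^sub>v x) \<bullet> c = k * (x \<bullet> c)" using x smult_scalar_prod_distrib[of x n c k] by blast
    then show ?thesis using x c by simp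
  qed
  then show "k \<cdot>\<^sub>v x \<in> {u \<in> carrier_vec n. \<forall>c\<in>C. u \<bullet> c = 0}" using x by simp
qed

lemma double_dual:
  fixes C :: "'a::{comm_ring_1,finite} vec set"
  assumes frob: "frobenius_local_ring TYPE('a)" and C: "linear_code n C"
  shows "dual_code n (dual_code n C) = C"
proof -
  have Csub: "C \<subseteq> carrier_vec n" using C unfolding linear_code_def by auto
  have DC: "linear_code n (dual_code n C)" by (rule dual_linear[OF Csub])
  have sub: "C \<subseteq> dual_code n (dual_code n C)"
  proof
    fix c assume c: "c \<in> C"
    then have cc: "c \<in> carrier_vec n" using Csub by auto
    have "c \<bullet> u = 0" if u: "u \<in> dual_code n C" for u
    proof -
      have "u \<in> carrier_vec n" "u \<bullet> c = 0" using u c unfolding dual_code_def by auto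
      then show ?thesis using comm_scalar_prod[OF cc] by metis
    qed
    then show "c \<in> dual_code n (dual_code n C)" unfolding dual_code_def using cc by blast
  qed
  have e1: "card C * card (dual_code n C) = card (carrier_vec n :: 'a vec set)" by (rule duality[OF frob C])
  have e2: "card (dual_code n C) * card (dual_code n (dual_code n C)) = card (carrier_vec n :: 'a vec set)"
    by (rule duality[OF frob DC])
  have "0\<^sub>v n \<in> dual_code n C" using DC unfolding linear_code_def by auto
  moreover have "finite (dual_code n C)"
    by (rule finite_subset[OF _ finite_carrier_vec]) (auto simp: dual_code_def)
  ultimately have "card (dual_code n C) > 0" using card_gt_0_iff by blast
  moreover have "card (dual_code n C) * card C = card C * card (dual_code n C)" by (rule mult.commute)
  ultimately have "card (dual_code n C) * card C = card (dual_code n C) * card (dual_code n (dual_code n C))"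
    "card (dual_code n C) \<noteq> 0" using e1 e2 by linarith+
  then have "card C = card (dual_code n (dual_code n C))" using mult_left_cancel by blast
  moreover have "finite (dual_code n (dual_code n C))"
    by (rule finite_subset[OF _ finite_carrier_vec]) (auto simp: dual_code_def)
  ultimately show ?thesis using sub card_subset_eq[of "dual_code n (dual_code n C)" C] by simp
qed

lemma col_row:
  fixes M :: "'a::{comm_ring_1,finite} mat"
  assumes frob: "frobenius_local_ring TYPE('a)" and M: "M \<in> carrier_mat r c"
  shows "card ((\<lambda>x. M *\<^sub>v x) ` carrier_vec c) = card (row_module M)"
proof -
  have f: "card (carrier_vec c :: 'a vec set) = card ((\<lambda>x. M *\<^sub>v x) ` carrier_vec c) * card {x\<in>carrier_vec c. M *\<^sub>v x = 0\<^sub>v r}"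
    by (rule fiber_count[OF M linear_code_carrier])
  have "{x\<in>carrier_vec c. M *\<^sub>v x = 0\<^sub>v r} = dual_code c (row_module M)"
    using kernel_char[OF M] unfolding dual_code_def by blast
  then have f': "card (carrier_vec c :: 'a vec set) = card ((\<lambda>x. M *\<^sub>v x) ` carrier_vec c) * card (dual_code c (row_module M))"
    using f by simp
  have RM: "linear_code c (row_module M)" by (rule rowmod_linear[OF M])
  have d: "card (row_module M) * card (dual_code c (row_module M)) = card (carrier_vec c :: 'a vec set)"
    by (rule duality[OF frob RM])
  have RMsub: "row_module M \<subseteq> carrier_vec c" using RM unfolding linear_code_def by auto
  have DC: "linear_code c (dual_code c (row_module M))" by (rule dual_linear[OF RMsub])
  have "0\<^sub>v c \<in> dual_code c (row_module M)" using DC unfolding linear_code_def by auto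
  moreover have "finite (dual_code c (row_module M))"
    by (rule finite_subset[OF _ finite_carrier_vec]) (auto simp: dual_code_def)
  ultimately have "card (dual_code c (row_module M)) > 0" using card_gt_0_iff by blast
  then have "card ((\<lambda>x. M *\<^sub>v x) ` carrier_vec c) * card (dual_code c (row_module M)) = card (row_module M) * card (dual_code c (row_module M))"
    "card (dual_code c (row_module M)) \<noteq> 0" using f' d by linarith+
  then show ?thesis using mult_right_cancel by blast
qed

lemma card_key:
  fixes C1 C2 :: "'a::{comm_ring_1,finite} vec set"
    and G1 G2 H1 H2 :: "'a mat"
  assumes frob: "frobenius_local_ring TYPE('a)"
    and C1: "linear_code n C1" and C2: "linear_code n C2"
    and G1: "generator_matrix n G1 C1"
    and H2: "parity_check_matrix n H2 C2"
  shows "card C1 = card (row_module (H2 * transpose_mat G1)) * card (C1 \<inter> C2)"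
proof -
  define r where "r = dim_row H2"
  define k where "k = dim_row G1"
  have H2c: "H2 \<in> carrier_mat r n" and H2r: "row_module H2 = dual_code n C2"
    using H2 unfolding parity_check_matrix_def generator_matrix_def r_def by auto
  have G1c: "G1 \<in> carrier_mat k n" and G1r: "row_module G1 = C1"
    using G1 unfolding generator_matrix_def k_def by auto
  have G1T: "transpose_mat G1 \<in> carrier_mat n k" using G1c by simp
  define M where "M = H2 * transpose_mat G1"
  have Mc: "M \<in> carrier_mat r k" unfolding M_def using H2c G1T by simp
  have C1sub: "C1 \<subseteq> carrier_vec n" using C1 unfolding linear_code_def by auto
  have C2eq: "C2 = dual_code n (row_module H2)" unfolding H2r using double_dual[OF frob C2] by simp
  have f: "card C1 = card ((\<lambda>x. H2 *\<^sub>v x) ` C1) * card {x\<in>C1. H2 *\<^sub>v x = 0\<^sub>v r}"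
    by (rule fiber_count[OF H2c C1])
  have ker: "{x\<in>C1. H2 *\<^sub>v x = 0\<^sub>v r} = C1 \<inter> C2"
    unfolding C2eq using kernel_char[OF H2c] C1sub by blast
  have C1eq: "C1 = (\<lambda>y. transpose_mat G1 *\<^sub>v y) ` carrier_vec k"
    unfolding G1r[symmetric] row_module_def k_def by auto
  have img: "(\<lambda>x. H2 *\<^sub>v x) ` C1 = (\<lambda>y. M *\<^sub>v y) ` carrier_vec k"
  proof -
    have "(\<lambda>x. H2 *\<^sub>v x) ` C1 = (\<lambda>y. H2 *\<^sub>v (transpose_mat G1 *\<^sub>v y)) ` carrier_vec k"
      unfolding C1eq by (simp add: image_image)
    also have "\<dots> = (\<lambda>y. M *\<^sub>v y) ` carrier_vec k"
      unfolding M_def by (rule image_cong[OF refl]) (use H2c G1T in simp)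
    finally show ?thesis .
  qed
  have "card ((\<lambda>y. M *\<^sub>v y) ` carrier_vec k) = card (row_module M)" by (rule col_row[OF frob Mc])
  then show ?thesis using f ker img unfolding M_def by simp
qed

theorem lemma3p9:
  fixes C1 C2 :: "'a::{comm_ring_1,finite} vec set"
    and G1 G2 H1 H2 :: "'a mat"
    and n q :: nat
  assumes "local_ring TYPE('a)"
    and "frobenius_local_ring TYPE('a)"
    and "residue_field_card TYPE('a) = q"
    and "linear_code n C1" and "linear_code n C2"
    and "generator_matrix n G1 C1" and "generator_matrix n G2 C2"
    and "parity_check_matrix n H1 C1" and "parity_check_matrix n H2 C2"
  shows "code_dim q (C1 \<inter> C2) = code_dim q C1 - rank_q q (H2 * transpose_mat G1)
       \<or> code_dim q (C1 \<inter> C2) = code_dim q C2 - rank_q q (H1 * transpose_mat G2)"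
proof (rule disjI1)
  let ?M = "H2 * transpose_mat G1"
  have key: "card C1 = card (row_module ?M) * card (C1 \<inter> C2)"
    by (rule card_key[OF assms(2,4,5,6,9)])
  have "0\<^sub>v n \<in> C1 \<inter> C2" using assms(4,5) unfolding linear_code_def by auto
  moreover have "finite (C1 \<inter> C2)"
    by (rule finite_subset[OF _ finite_carrier_vec]) (use assms(4) in \<open>auto simp: linear_code_def\<close>)
  ultimately have a: "card (C1 \<inter> C2) > 0" using card_gt_0_iff by blast
  have "card C1 > 0"
  proof -
    have "0\<^sub>v n \<in> C1" using assms(4) unfolding linear_code_def by auto
    moreover have "finite C1"
      by (rule finite_subset[OF _ finite_carrier_vec]) (use assms(4) in \<open>auto simp: linear_code_def\<close>)
    ultimately show ?thesis using card_gt_0_iff by blast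
  qed
  then have b: "card (row_module ?M) > 0" using key by simp
  have "ln (real (card C1)) = ln (real (card (row_module ?M))) + ln (real (card (C1 \<inter> C2)))"
    unfolding key of_nat_mult using a b by (simp add: ln_mult)
  then show "code_dim q (C1 \<inter> C2) = code_dim q C1 - rank_q q ?M"
    unfolding code_dim_def rank_q_def log_def by (simp add: add_divide_distrib)
qed

end
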